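(* Let $\mathsf{HAL}^{pa},\mathsf{HAL}^{p},\mathsf{HAL}^{a},\mathsf{HAL}$ be the symmetric functions with parameter $t$ uniquely determined by $$\mathsf{HAL}^{pa}=p_1\cdot\Bigl([\Sigma_t\operatorname{Assoc}]\circ\operatorname{Comm}\circ[p_1-t\,\mathsf{HAL}^{pa}]\Bigr),\qquad \mathsf{HAL}^{p}=p_1\cdot\Bigl([\Sigma_t\operatorname{Lie}]\circ\operatorname{Comm}\circ[p_1-t\,\mathsf{HAL}^{pa}]\Bigr),$$ $$\mathsf{HAL}^{a}=[\operatorname{Comm}-p_1]\circ[p_1-t\,\mathsf{HAL}^{pa}],\qquad \mathsf{HAL}=\mathsf{HAL}^{p}+\mathsf{HAL}^{a}-\mathsf{HAL}^{pa}.$$ Then $\mathsf{HAL}^{p}=p_1\,\partial_{p_1}\mathsf{HAL}$.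
   Context: Symmetric functions with a parameter $t$ are formal power series in $p_1,p_2,\dots$ (power sums) with coefficients in $\mathbb{Q}[t]$ (or $\mathbb{Q}[[t]]$); $\partial_{p_1}$ is the partial derivative with respect to $p_1$. Plethysm $\circ$ acts nontrivially on $t$: $p_k\circ f$ is obtained from $f$ by replacing each $p_j$ by $p_{jk}$ and $t$ by $t^k$ (rational constants are fixed), and $g\circ f$ is obtained by substituting $p_k\circ f$ for $p_k$ in $g$. The $t$-suspension is $\Sigma_t f=-\frac1t f(-t p_1,-t^2p_2,-t^3p_3,\dots)$. $\operatorname{Assoc}=p_1/(1-p_1)$ (so $\Sigma_t\operatorname{Assoc}=p_1/(1+tp_1)$), $\operatorname{Comm}=\exp\bigl(\sum_{k\ge1}p_k/k\bigr)-1$, and $\operatorname{Lie}=\sum_{k\ge1}\frac{\mu(k)}{k}\bigl(-\ln(1-p_k)\bigr)$ ($\mu$ the number-theoretic Möbius function) is the Frobenius characteristic of the Lie operad. *)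

theory Defs
  imports "HOL-Library.Multiset" "HOL-Computational_Algebra.Polynomial"
    "HOL-Computational_Algebra.Squarefree" "HOL-Computational_Algebra.Primes"
begin

text \<open>Symmetric functions with parameter t: formal power series in the power sums
  p_1, p_2, ... with coefficients in Q[t].  A series is represented by its coefficient
  function: the monomial p_lam = prod over the parts k of the multiset lam of p_k
  gets the coefficient (f lam) in Q[t].  Multisets containing 0 play no role.\<close>

type_synonym sf = "nat multiset \<Rightarrow> rat poly"

definition sf_one :: sf where
  "sf_one = (\<lambda>m. if m = {#} then 1 else 0)"

definition sf_p1 :: sf where
  "sf_p1 = (\<lambda>m. if m = {#1#} then 1 else 0)"

definition sf_add :: "sf \<Rightarrow> sf \<Rightarrow> sf" where
  "sf_add f g = (\<lambda>m. f m + g m)"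

definition sf_minus :: "sf \<Rightarrow> sf \<Rightarrow> sf" where
  "sf_minus f g = (\<lambda>m. f m - g m)"

definition sf_tmult :: "sf \<Rightarrow> sf" where
  "sf_tmult f = (\<lambda>m. [:0, 1:] * f m)"

definition sf_mult :: "sf \<Rightarrow> sf \<Rightarrow> sf" where
  "sf_mult f g = (\<lambda>m. \<Sum>a\<in>{a. a \<subseteq># m}. f a * g (m - a))"

definition sf_prod_list :: "sf list \<Rightarrow> sf" where
  "sf_prod_list fs = foldr sf_mult fs sf_one"

text \<open>p_k o f : replace p_j by p_(jk) and t by t^k\<close>
definition sf_pk :: "nat \<Rightarrow> sf \<Rightarrow> sf" where
  "sf_pk k f = (\<lambda>m. if (\<forall>j\<in>#m. k dvd j)
                     then pcompose (f (image_mset (\<lambda>j. j div k) m)) (monom 1 k) else 0)"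

text \<open>plethysm g o f (for f without constant term): substitute p_k o f for p_k in g.
  Only monomials p_a of g with weight(a) <= weight(m) and length(a) <= length(m)
  can contribute to the coefficient of p_m, so the sum is finite.\<close>
definition sf_pleth :: "sf \<Rightarrow> sf \<Rightarrow> sf" where
  "sf_pleth g f = (\<lambda>m. \<Sum>a\<in>{a. set_mset a \<subseteq> {1..sum_mset m} \<and> size a \<le> size m}.
       g a * sf_prod_list (map (\<lambda>k. sf_pk k f) (sorted_list_of_multiset a)) m)"

text \<open>t-suspension: Sigma_t f = -(1/t) f(-t p_1, -t^2 p_2, ...) (for f without constant term)\<close>
definition sf_susp :: "sf \<Rightarrow> sf" where
  "sf_susp f = (\<lambda>m. if m = {#} then 0
      else smult (- ((-1) ^ size m)) (monom 1 (sum_mset m - 1) * f m))"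

definition sf_dp1 :: "sf \<Rightarrow> sf" where
  "sf_dp1 f = (\<lambda>m. of_nat (count m 1 + 1) * f (add_mset 1 m))"

text \<open>Assoc = p_1/(1-p_1) = sum_(n>=1) p_1^n\<close>
definition sf_Assoc :: sf where
  "sf_Assoc = (\<lambda>m. if m \<noteq> {#} \<and> set_mset m \<subseteq> {1} then 1 else 0)"

definition zee :: "nat multiset \<Rightarrow> nat" where
  "zee m = (\<Prod>i\<in>set_mset m. i ^ count m i * fact (count m i))"

text \<open>Comm = exp(sum_k p_k/k) - 1 = sum over nonempty lam of p_lam / z_lam\<close>
definition sf_Comm :: sf where
  "sf_Comm = (\<lambda>m. if m = {#} \<or> 0 \<in># m then 0 else [: 1 / of_nat (zee m) :])"

definition mobius :: "nat \<Rightarrow> int" where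
  "mobius k = (if squarefree k then (-1) ^ card (prime_factors k) else 0)"

text \<open>Lie = sum_(k>=1) mu(k)/k (-ln(1-p_k)) = sum_(k,n>=1) mu(k)/(k n) p_k^n\<close>
definition sf_Lie :: sf where
  "sf_Lie = (\<lambda>m. \<Sum>k\<in>{1..sum_mset m}. \<Sum>n\<in>{1..size m}.
      if m = replicate_mset n k then [: of_int (mobius k) / of_nat (k * n) :] else 0)"

end

theory Submission imports Defs begin

lemma finite_submsets: "finite {a. a \<subseteq># (m::'a multiset)}"
proof -
  have "{a. a \<subseteq># m} \<subseteq> (\<Union>k\<le>size m. multisets_of_size (set_mset m) k)"
    by (auto simp: multisets_of_size_def size_mset_mono dest: mset_subset_eqD)
  moreover have "finite (\<Union>k\<le>size m. multisets_of_size (set_mset m) k)" by auto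
  ultimately show ?thesis by (rule finite_subset)
qed

definition Bd :: "nat \<Rightarrow> nat \<Rightarrow> nat multiset set" where
  "Bd N n = {a. set_mset a \<subseteq> {1..N} \<and> size a \<le> n}"

lemma finite_Bd: "finite (Bd N n)"
proof -
  have "Bd N n \<subseteq> (\<Union>k\<le>n. multisets_of_size {1..N} k)"
    by (auto simp: Bd_def multisets_of_size_def)
  moreover have "finite (\<Union>k\<le>n. multisets_of_size {1..N} k)" by auto
  ultimately show ?thesis by (rule finite_subset)
qed

lemma diff_diff_sub: "a \<subseteq># m \<Longrightarrow> m - (m - a) = (a::'a multiset)"
  by (auto simp: multiset_eq_iff subseteq_mset_def)

lemma sf_mult_comm: "sf_mult f g = sf_mult g f"
proof
  fix m :: "nat multiset"
  show "sf_mult f g m = sf_mult g f m"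
    unfolding sf_mult_def
    by (rule sum.reindex_bij_witness[where i="\<lambda>a. m - a" and j="\<lambda>a. m - a"])
       (auto simp: diff_diff_sub mult.commute)
qed

lemma sf_mult_assoc: "sf_mult (sf_mult f g) h = sf_mult f (sf_mult g h)"
proof
  fix m :: "nat multiset"
  let ?F = "\<lambda>a b. f a * g b * h (m - (a + b))"
  have L: "sf_mult (sf_mult f g) h m = (\<Sum>(a,b)\<in>{(a,b). a + b \<subseteq># m}. ?F a b)"
  proof -
    have "sf_mult (sf_mult f g) h m = (\<Sum>c\<in>{c. c \<subseteq># m}. \<Sum>a\<in>{a. a \<subseteq># c}. f a * g (c - a) * h (m - c))"
      unfolding sf_mult_def by (simp add: sum_distrib_right)
    also have "\<dots> = (\<Sum>(c,a)\<in>Sigma {c. c \<subseteq># m} (\<lambda>c. {a. a \<subseteq># c}). f a * g (c - a) * h (m - c))"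
      by (rule sum.Sigma) (auto simp: finite_submsets)
    also have "\<dots> = (\<Sum>(a,b)\<in>{(a,b). a + b \<subseteq># m}. ?F a b)"
      by (rule sum.reindex_bij_witness[where i="\<lambda>(a,b). (a+b, a)" and j="\<lambda>(c,a). (a, c - a)"])
         (auto simp: subset_mset.add_diff_inverse intro: subset_mset.order_trans)
    finally show ?thesis .
  qed
  have R: "sf_mult f (sf_mult g h) m = (\<Sum>(a,b)\<in>{(a,b). a + b \<subseteq># m}. ?F a b)"
  proof -
    have "sf_mult f (sf_mult g h) m = (\<Sum>a\<in>{a. a \<subseteq># m}. \<Sum>b\<in>{b. b \<subseteq># m - a}. f a * g b * h (m - a - b))"
      unfolding sf_mult_def by (simp add: sum_distrib_left mult.assoc)
    also have "\<dots> = (\<Sum>(a,b)\<in>Sigma {a. a \<subseteq># m} (\<lambda>a. {b. b \<subseteq># m - a}). f a * g b * h (m - a - b))"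
      by (rule sum.Sigma) (auto simp: finite_submsets)
    also have "\<dots> = (\<Sum>(a,b)\<in>{(a,b). a + b \<subseteq># m}. ?F a b)"
      apply (rule sum.cong)
       apply (auto simp: subset_mset.le_diff_conv2 add.commute diff_diff_add_mset)
       apply (meson mset_subset_eq_add_left subset_mset.order_trans)
      by (metis add.commute subset_mset.le_diff_conv2 mset_subset_eq_add_left subset_mset.order_trans)
    finally show ?thesis .
  qed
  show "sf_mult (sf_mult f g) h m = sf_mult f (sf_mult g h) m" using L R by simp
qed

lemma sf_mult_one: "sf_mult sf_one g = g"
proof
  fix m :: "nat multiset"
  have "sf_mult sf_one g m = (\<Sum>a\<in>{a. a \<subseteq># m}. if a = {#} then g (m - a) else 0)"
    unfolding sf_mult_def sf_one_def by (rule sum.cong) auto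
  also have "\<dots> = g m" using sum.delta[OF finite_submsets, where a="{#}" and b="\<lambda>a. g (m - a)"] by simp
  finally show "sf_mult sf_one g m = g m" .
qed

lemma sf_mult_distrib: "sf_mult (sf_add f g) h = sf_add (sf_mult f h) (sf_mult g h)"
  unfolding sf_mult_def sf_add_def by (auto simp: ring_distribs sum.distrib)

typedef sfr = "UNIV :: sf set" by auto
setup_lifting type_definition_sfr

instantiation sfr :: comm_ring_1
begin
lift_definition zero_sfr :: sfr is "\<lambda>_. 0" .
lift_definition one_sfr :: sfr is sf_one .
lift_definition plus_sfr :: "sfr \<Rightarrow> sfr \<Rightarrow> sfr" is sf_add .
lift_definition minus_sfr :: "sfr \<Rightarrow> sfr \<Rightarrow> sfr" is sf_minus .
lift_definition uminus_sfr :: "sfr \<Rightarrow> sfr" is "\<lambda>f m. - f m" .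
lift_definition times_sfr :: "sfr \<Rightarrow> sfr \<Rightarrow> sfr" is sf_mult .
instance
proof
  fix a b c :: sfr
  show "a * b * c = a * (b * c)" by transfer (rule sf_mult_assoc)
  show "a * b = b * a" by transfer (rule sf_mult_comm)
  show "1 * a = a" by transfer (rule sf_mult_one)
  show "(a + b) * c = a * c + b * c" by transfer (rule sf_mult_distrib)
  show "a + b + c = a + (b + c)" by transfer (auto simp: sf_add_def add.assoc)
  show "a + b = b + a" by transfer (auto simp: sf_add_def add.commute)
  show "0 + a = a" by transfer (auto simp: sf_add_def)
  show "- a + a = 0" by transfer (auto simp: sf_add_def)
  show "a - b = a + - b" by transfer (auto simp: sf_add_def sf_minus_def)
  show "(0::sfr) \<noteq> 1" by transfer (auto simp: sf_one_def fun_eq_iff)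
qed
end


lemma sum_flip: "(\<Sum>a\<in>{a. a \<subseteq># M}. F a (M - a)) = (\<Sum>a\<in>{a. a \<subseteq># M}. F (M - a) a)"
  by (rule sum.reindex_bij_witness[where i="\<lambda>a. M - a" and j="\<lambda>a. M - a"])
     (auto simp: diff_diff_sub)

lemma sum_core:
  fixes F :: "nat multiset \<Rightarrow> nat multiset \<Rightarrow> rat poly"
  shows "(\<Sum>a\<in>{a. a \<subseteq># add_mset 1 m}. of_nat (count a 1) * F a (add_mset 1 m - a))
       = (\<Sum>a\<in>{a. a \<subseteq># m}. of_nat (count a 1 + 1) * F (add_mset 1 a) (m - a))"
proof -
  have "(\<Sum>a\<in>{a. a \<subseteq># add_mset 1 m}. of_nat (count a 1) * F a (add_mset 1 m - a))
      = (\<Sum>a\<in>{a. a \<subseteq># add_mset 1 m \<and> 1 \<in># a}. of_nat (count a 1) * F a (add_mset 1 m - a))"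
    by (rule sum.mono_neutral_right) (auto simp: finite_submsets not_in_iff)
  also have "\<dots> = (\<Sum>a\<in>{a. a \<subseteq># m}. of_nat (count a 1 + 1) * F (add_mset 1 a) (m - a))"
  proof (rule sum.reindex_bij_witness[where j="\<lambda>a. a - {#1#}" and i="\<lambda>a. add_mset 1 a"])
    fix a assume "a \<in> {a. a \<subseteq># add_mset 1 m \<and> 1 \<in># a}"
    then have a: "a \<subseteq># add_mset 1 m" "1 \<in># a" by auto
    show "add_mset 1 (a - {#1#}) = a" using a by simp
    show "a - {#1#} \<in> {a. a \<subseteq># m}" using a
      by (simp add: subset_eq_diff_conv)
    show "of_nat (count (a - {#1#}) 1 + 1) * F (add_mset 1 (a - {#1#})) (m - (a - {#1#}))
        = of_nat (count a 1) * F a (add_mset 1 m - a)"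
      using a by (auto simp: insert_DiffM2 count_diff)
         (metis add_mset_diff_bothsides insert_DiffM)
  next
    fix a assume "a \<in> {a. a \<subseteq># m}"
    then show "add_mset 1 a - {#1#} = a" "add_mset 1 a \<in> {a. a \<subseteq># add_mset 1 m \<and> 1 \<in># a}"
      by auto
  qed
  finally show ?thesis .
qed

lemma sf_dp1_mult: "sf_dp1 (sf_mult f g) = sf_add (sf_mult (sf_dp1 f) g) (sf_mult f (sf_dp1 g))"
proof
  fix m :: "nat multiset"
  define M where "M = add_mset 1 m"
  have cM: "count M 1 = count m 1 + 1" by (simp add: M_def)
  have "sf_dp1 (sf_mult f g) m = of_nat (count M 1) * (\<Sum>a\<in>{a. a \<subseteq># M}. f a * g (M - a))"
    unfolding sf_dp1_def sf_mult_def M_def by simp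
  also have "\<dots> = (\<Sum>a\<in>{a. a \<subseteq># M}. (of_nat (count a 1) + of_nat (count (M - a) 1)) * (f a * g (M - a)))"
    unfolding sum_distrib_left
  proof (rule sum.cong)
    fix a assume "a \<in> {a. a \<subseteq># M}"
    then have "count a 1 \<le> count M 1" by (simp add: subseteq_mset_def)
    then have "count M 1 = count a 1 + count (M - a) 1" by simp
    then show "of_nat (count M 1) * (f a * g (M - a)) = (of_nat (count a 1) + of_nat (count (M - a) 1)) * (f a * g (M - a))"
      by (metis of_nat_add)
  qed simp
  also have "\<dots> = (\<Sum>a\<in>{a. a \<subseteq># M}. of_nat (count a 1) * (f a * g (M - a)))
                 + (\<Sum>a\<in>{a. a \<subseteq># M}. of_nat (count (M - a) 1) * (f a * g (M - a)))"
    by (simp add: ring_distribs sum.distrib)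
  also have "(\<Sum>a\<in>{a. a \<subseteq># M}. of_nat (count a 1) * (f a * g (M - a)))
       = (\<Sum>a\<in>{a. a \<subseteq># m}. of_nat (count a 1 + 1) * (f (add_mset 1 a) * g (m - a)))"
    unfolding M_def by (rule sum_core[where F="\<lambda>a b. f a * g b"])
  also have "\<dots> = sf_mult (sf_dp1 f) g m"
    unfolding sf_mult_def sf_dp1_def by (simp add: mult.assoc)
  also have "(\<Sum>a\<in>{a. a \<subseteq># M}. of_nat (count (M - a) 1) * (f a * g (M - a)))
       = (\<Sum>a\<in>{a. a \<subseteq># M}. of_nat (count a 1) * (f (M - a) * g a))"
    by (rule sum_flip[where F="\<lambda>a b. of_nat (count b 1) * (f a * g b)"])
  also have "\<dots> = (\<Sum>a\<in>{a. a \<subseteq># m}. of_nat (count a 1 + 1) * (f (m - a) * g (add_mset 1 a)))"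
    unfolding M_def by (rule sum_core[where F="\<lambda>a b. f b * g a"])
  also have "\<dots> = (\<Sum>a\<in>{a. a \<subseteq># m}. of_nat (count (m - a) 1 + 1) * (f a * g (add_mset 1 (m - a))))"
    by (rule sum_flip[where F="\<lambda>x y. of_nat (count y 1 + 1) * (f x * g (add_mset 1 y))", symmetric])
  also have "\<dots> = sf_mult f (sf_dp1 g) m"
    unfolding sf_mult_def sf_dp1_def by (simp add: mult.left_commute)
  finally show "sf_dp1 (sf_mult f g) m = sf_add (sf_mult (sf_dp1 f) g) (sf_mult f (sf_dp1 g)) m"
    by (simp add: sf_add_def)
qed


lemma Rep_add: "Rep_sfr (x + y) m = Rep_sfr x m + Rep_sfr y m"
  by (simp add: plus_sfr.rep_eq sf_add_def)
lemma Rep_minus: "Rep_sfr (x - y) m = Rep_sfr x m - Rep_sfr y m"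
  by (simp add: minus_sfr.rep_eq sf_minus_def)
lemma Rep_uminus: "Rep_sfr (- x) m = - Rep_sfr x m"
  by (simp add: uminus_sfr.rep_eq)
lemma Rep_zero: "Rep_sfr 0 m = 0"
  by (simp add: zero_sfr.rep_eq)
lemma Rep_one: "Rep_sfr 1 m = (if m = {#} then 1 else 0)"
  by (simp add: one_sfr.rep_eq sf_one_def)
lemma Rep_mult: "Rep_sfr (x * y) m = (\<Sum>a\<in>{a. a \<subseteq># m}. Rep_sfr x a * Rep_sfr y (m - a))"
  by (simp add: times_sfr.rep_eq sf_mult_def)

lemma Rep_sum: "Rep_sfr (sum f A) m = (\<Sum>x\<in>A. Rep_sfr (f x) m)"
  by (induction A rule: infinite_finite_induct) (auto simp: Rep_add Rep_zero)

lemma Rep_of_nat_mult: "Rep_sfr (of_nat n * x) m = of_nat n * Rep_sfr x m"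
  by (induction n) (auto simp: Rep_add Rep_zero ring_distribs)

lift_definition pp :: sfr is sf_p1 .
lift_definition tt :: sfr is "\<lambda>m. if m = {#} then [:0, 1:] else 0" .
lift_definition Dr :: "sfr \<Rightarrow> sfr" is sf_dp1 .

lemma Rep_tt_mult: "Rep_sfr (tt * x) m = [:0, 1:] * Rep_sfr x m"
proof -
  have "Rep_sfr (tt * x) m = (\<Sum>a\<in>{a. a \<subseteq># m}. if a = {#} then [:0, 1:] * Rep_sfr x (m - a) else 0)"
    unfolding Rep_mult by (rule sum.cong) (auto simp: tt.rep_eq)
  also have "\<dots> = [:0, 1:] * Rep_sfr x m"
    using sum.delta[OF finite_submsets, where a="{#}" and b="\<lambda>a. [:0, 1:] * Rep_sfr x (m - a)"] by simp
  finally show ?thesis .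
qed

lemma Rep_pp_mult: "Rep_sfr (pp * x) m = (if 1 \<in># m then Rep_sfr x (m - {#1#}) else 0)"
proof -
  have "Rep_sfr (pp * x) m = (\<Sum>a\<in>{a. a \<subseteq># m}. if a = {#1#} then Rep_sfr x (m - a) else 0)"
    unfolding Rep_mult by (rule sum.cong) (auto simp: pp.rep_eq sf_p1_def)
  also have "\<dots> = (if 1 \<in># m then Rep_sfr x (m - {#1#}) else 0)"
    using sum.delta[OF finite_submsets, where a="{#1#}" and b="\<lambda>a. Rep_sfr x (m - a)"] by simp
  finally show ?thesis .
qed

lemma Dr_mult: "Dr (x * y) = Dr x * y + x * Dr y"
  by transfer (rule sf_dp1_mult)
lemma Dr_add: "Dr (x + y) = Dr x + Dr y"
  by transfer (auto simp: sf_dp1_def sf_add_def ring_distribs)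
lemma Dr_minus: "Dr (x - y) = Dr x - Dr y"
  by transfer (auto simp: sf_dp1_def sf_minus_def ring_distribs)
lemma Dr_one: "Dr 1 = 0"
  by transfer (auto simp: sf_dp1_def sf_one_def)
lemma Dr_pp: "Dr pp = 1"
  by transfer (auto simp: sf_dp1_def sf_one_def sf_p1_def fun_eq_iff)
lemma Dr_tt: "Dr tt = 0"
  by transfer (auto simp: sf_dp1_def fun_eq_iff)

lift_definition pkr :: "nat \<Rightarrow> sfr \<Rightarrow> sfr" is sf_pk .

definition PP :: "sfr \<Rightarrow> nat multiset \<Rightarrow> sfr" where
  "PP x a = prod_mset (image_mset (\<lambda>k. pkr k x) a)"

lemma PP_empty[simp]: "PP x {#} = 1" by (simp add: PP_def)
lemma PP_add_mset: "PP x (add_mset k a) = pkr k x * PP x a" by (simp add: PP_def)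
lemma PP_union: "PP x (a + b) = PP x a * PP x b" by (simp add: PP_def)

lemma sf_prod_list_eq:
  "sf_prod_list (map (\<lambda>k. sf_pk k f) xs) = Rep_sfr (prod_list (map (\<lambda>k. pkr k (Abs_sfr f)) xs))"
proof (induction xs)
  case Nil
  then show ?case by (simp add: sf_prod_list_def one_sfr.rep_eq)
next
  case (Cons k xs)
  then show ?case
    by (simp add: sf_prod_list_def times_sfr.rep_eq pkr.rep_eq Abs_sfr_inverse)
qed

lemma sf_prod_list_PP:
  "sf_prod_list (map (\<lambda>k. sf_pk k f) (sorted_list_of_multiset a)) = Rep_sfr (PP (Abs_sfr f) a)"
  unfolding sf_prod_list_eq PP_def
  by (metis mset_map mset_sorted_list_of_multiset prod_mset_prod_list)

lemma pleth_eq: "sf_pleth g f m = (\<Sum>a\<in>Bd (sum_mset m) (size m). g a * Rep_sfr (PP (Abs_sfr f) a) m)"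
  unfolding sf_pleth_def Bd_def sf_prod_list_PP ..

definition clean :: "sf \<Rightarrow> bool" where
  "clean f \<longleftrightarrow> (\<forall>m. 0 \<in># m \<longrightarrow> f m = 0)"

lemma sub_sum_size:
  assumes "b \<subseteq># (m::nat multiset)"
  shows "sum_mset b + sum_mset (m - b) = sum_mset m" "size b + size (m - b) = size m"
proof -
  have "m = b + (m - b)" using assms by (simp add: subset_mset.add_diff_inverse)
  then show "sum_mset b + sum_mset (m - b) = sum_mset m" "size b + size (m - b) = size m"
    by (metis sum_mset.union, metis size_union)
qed

lemma pk_nonzero:
  assumes "clean (Rep_sfr x)" "Rep_sfr x {#} = 0" "k \<ge> 1" "Rep_sfr (pkr k x) b \<noteq> 0"
  shows "b \<noteq> {#}" "\<And>j. j \<in># b \<Longrightarrow> k dvd j \<and> j \<noteq> 0"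
proof -
  show "b \<noteq> {#}" using assms by (auto simp: pkr.rep_eq sf_pk_def)
  fix j assume j: "j \<in># b"
  show "k dvd j \<and> j \<noteq> 0"
  proof
    show "k dvd j" using assms j by (auto simp: pkr.rep_eq sf_pk_def split: if_splits)
    show "j \<noteq> 0"
    proof
      assume "j = 0"
      then have "0 \<in># image_mset (\<lambda>j. j div k) b" using j by force
      then show False using assms by (auto simp: pkr.rep_eq sf_pk_def clean_def split: if_splits)
    qed
  qed
qed

lemma PP_vanish:
  assumes "clean (Rep_sfr x)" "Rep_sfr x {#} = 0" "0 \<notin># a" "Rep_sfr (PP x a) m \<noteq> 0"
  shows "size a \<le> size m \<and> (\<forall>k\<in>#a. k \<le> sum_mset m)"
  using assms(3,4)
proof (induction a arbitrary: m)
  case empty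
  then show ?case by simp
next
  case (add k a)
  from add.prems obtain b where b: "b \<subseteq># m" "Rep_sfr (pkr k x) b \<noteq> 0" "Rep_sfr (PP x a) (m - b) \<noteq> 0"
    unfolding PP_add_mset Rep_mult by (metis (no_types, lifting) mem_Collect_eq mult_eq_0_iff sum.neutral)
  have k1: "k \<ge> 1" using add.prems by (cases k) auto
  have bne: "b \<noteq> {#}" and bj: "\<And>j. j \<in># b \<Longrightarrow> k dvd j \<and> j \<noteq> 0"
    using pk_nonzero[OF assms(1,2) k1 b(2)] by auto
  obtain j where j: "j \<in># b" using bne by (meson multiset_nonemptyE)
  have "k \<le> j" using bj[OF j] by (simp add: dvd_imp_le)
  also have "j \<le> sum_mset b" using j
    by (metis le_add1 multi_member_split sum_mset.add_mset)
  finally have kb: "k \<le> sum_mset b" .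
  have sb: "size b \<ge> 1" using bne by (simp add: Suc_le_eq nonempty_has_size)
  have IH: "size a \<le> size (m - b) \<and> (\<forall>k\<in>#a. k \<le> sum_mset (m - b))"
    using add.IH[of "m - b"] add.prems b by auto
  show ?case using IH kb sb sub_sum_size[OF b(1)] by auto
qed

lemma pleth_ext:
  assumes "clean f" "f {#} = 0" "sum_mset m \<le> N" "size m \<le> n"
  shows "sf_pleth g f m = (\<Sum>a\<in>Bd N n. g a * Rep_sfr (PP (Abs_sfr f) a) m)"
  unfolding pleth_eq
proof (rule sum.mono_neutral_left)
  show "finite (Bd N n)" by (rule finite_Bd)
  show "Bd (sum_mset m) (size m) \<subseteq> Bd N n" using assms by (auto simp: Bd_def)
  show "\<forall>a\<in>Bd N n - Bd (sum_mset m) (size m). g a * Rep_sfr (PP (Abs_sfr f) a) m = 0"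
  proof
    fix a assume a: "a \<in> Bd N n - Bd (sum_mset m) (size m)"
    then have "0 \<notin># a" by (auto simp: Bd_def)
    moreover have "\<not> (size a \<le> size m \<and> (\<forall>k\<in>#a. k \<le> sum_mset m))"
      using a by (auto simp: Bd_def)
    ultimately have "Rep_sfr (PP (Abs_sfr f) a) m = 0"
      using PP_vanish[of "Abs_sfr f"] assms by (auto simp: Abs_sfr_inverse)
    then show "g a * Rep_sfr (PP (Abs_sfr f) a) m = 0" by simp
  qed
qed


lift_definition plr :: "sfr \<Rightarrow> sfr \<Rightarrow> sfr" is sf_pleth .

definition cl :: "sfr \<Rightarrow> bool" where
  "cl x \<longleftrightarrow> clean (Rep_sfr x) \<and> Rep_sfr x {#} = 0"

lemma Rep_plr_ext:
  assumes "cl x" "sum_mset m \<le> N" "size m \<le> n"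
  shows "Rep_sfr (plr g x) m = (\<Sum>a\<in>Bd N n. Rep_sfr g a * Rep_sfr (PP x a) m)"
  using pleth_ext[of "Rep_sfr x" m N n "Rep_sfr g"] assms
  by (simp add: plr.rep_eq cl_def Rep_sfr_inverse)

lemma Rep_plr: "Rep_sfr (plr g x) m = (\<Sum>a\<in>Bd (sum_mset m) (size m). Rep_sfr g a * Rep_sfr (PP x a) m)"
  by (simp add: plr.rep_eq pleth_eq Rep_sfr_inverse)

lemma plr_add: "plr (g + h) x = plr g x + plr h x"
  by (rule Rep_sfr_inject[THEN iffD1], rule ext)
     (simp add: Rep_plr Rep_add ring_distribs sum.distrib)

lemma plr_minus: "plr (g - h) x = plr g x - plr h x"
  by (rule Rep_sfr_inject[THEN iffD1], rule ext)
     (simp add: Rep_plr Rep_minus ring_distribs sum_subtractf)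

lemma plr_tt: "plr (tt * g) x = tt * plr g x"
  by (rule Rep_sfr_inject[THEN iffD1], rule ext)
     (simp add: Rep_plr Rep_tt_mult sum_distrib_left mult.assoc)

lemma plr_one: "plr 1 x = 1"
proof (rule Rep_sfr_inject[THEN iffD1], rule ext)
  fix m
  have "Rep_sfr (plr 1 x) m = (\<Sum>a\<in>Bd (sum_mset m) (size m). if a = {#} then Rep_sfr (PP x a) m else 0)"
    unfolding Rep_plr by (rule sum.cong) (auto simp: Rep_one)
  also have "\<dots> = Rep_sfr 1 m"
    using sum.delta[OF finite_Bd, where a="{#}" and b="\<lambda>a. Rep_sfr (PP x a) m"]
    by (simp add: Bd_def)
  finally show "Rep_sfr (plr 1 x) m = Rep_sfr 1 m" .
qed

lemma pkr_1: "pkr 1 x = x"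
  by transfer (simp add: sf_pk_def fun_eq_iff monom_Suc monom_0)

lemma pkr_Suc0[simp]: "pkr (Suc 0) x = x"
  using pkr_1 by simp

lemma plr_pp:
  assumes "cl x" shows "plr pp x = x"
proof (rule Rep_sfr_inject[THEN iffD1], rule ext)
  fix m
  let ?B = "Bd (max 1 (sum_mset m)) (max 1 (size m))"
  have "Rep_sfr (plr pp x) m = (\<Sum>a\<in>?B. Rep_sfr pp a * Rep_sfr (PP x a) m)"
    by (rule Rep_plr_ext[OF assms]) auto
  also have "\<dots> = (\<Sum>a\<in>?B. if a = {#1#} then Rep_sfr (PP x a) m else 0)"
    by (rule sum.cong) (auto simp: pp.rep_eq sf_p1_def)
  also have "\<dots> = Rep_sfr (PP x {#1#}) m"
    using sum.delta[OF finite_Bd, where a="{#1#}" and b="\<lambda>a. Rep_sfr (PP x a) m"]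
    by (simp add: Bd_def)
  also have "\<dots> = Rep_sfr x m" unfolding PP_add_mset pkr_1 by simp
  finally show "Rep_sfr (plr pp x) m = Rep_sfr x m" .
qed

lemma PP_cl_vanish:
  assumes "cl x" "0 \<notin># a" "\<not> (size a \<le> size m \<and> (\<forall>k\<in>#a. k \<le> sum_mset m))"
  shows "Rep_sfr (PP x a) m = 0"
  using PP_vanish[of x a m] assms by (auto simp: cl_def)

lemma plr_mult:
  assumes "cl x" shows "plr (g * h) x = plr g x * plr h x"
proof (rule Rep_sfr_inject[THEN iffD1], rule ext)
  fix m
  define B where "B = Bd (sum_mset m) (size m)"
  let ?G = "Rep_sfr g" and ?H = "Rep_sfr h"
  let ?Q = "\<lambda>a1 a2. ?G a1 * ?H a2 * Rep_sfr (PP x a1 * PP x a2) m"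
  have finB: "finite B" by (simp add: B_def finite_Bd)
  have "Rep_sfr (plr (g * h) x) m = (\<Sum>a\<in>B. (\<Sum>a1\<in>{a1. a1 \<subseteq># a}. ?G a1 * ?H (a - a1)) * Rep_sfr (PP x a) m)"
    unfolding Rep_plr B_def Rep_mult ..
  also have "\<dots> = (\<Sum>a\<in>B. \<Sum>a1\<in>{a1. a1 \<subseteq># a}. ?Q a1 (a - a1))"
    unfolding sum_distrib_right
  proof (intro sum.cong refl)
    fix a a1 :: "nat multiset" assume "a1 \<in> {a1. a1 \<subseteq># a}"
    then have "a = a1 + (a - a1)" by (simp add: subset_mset.add_diff_inverse)
    then have "PP x a = PP x a1 * PP x (a - a1)" by (metis PP_union)
    then show "?G a1 * ?H (a - a1) * Rep_sfr (PP x a) m = ?Q a1 (a - a1)" by simp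
  qed
  also have "\<dots> = (\<Sum>(a,a1)\<in>Sigma B (\<lambda>a. {a1. a1 \<subseteq># a}). ?Q a1 (a - a1))"
    by (rule sum.Sigma) (auto simp: finB finite_submsets)
  also have "\<dots> = (\<Sum>(a1,a2)\<in>{(a1,a2). a1 + a2 \<in> B}. ?Q a1 a2)"
    by (rule sum.reindex_bij_witness[where i="\<lambda>(a1,a2). (a1+a2, a1)" and j="\<lambda>(a,a1). (a1, a - a1)"])
       (auto simp: subset_mset.add_diff_inverse)
  also have "\<dots> = (\<Sum>(a1,a2)\<in>B \<times> B. ?Q a1 a2)"
  proof (rule sum.mono_neutral_left)
    show "finite (B \<times> B)" using finB by simp
    show "{(a1, a2). a1 + a2 \<in> B} \<subseteq> B \<times> B" by (auto simp: B_def Bd_def)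
    show "\<forall>i\<in>B \<times> B - {(a1, a2). a1 + a2 \<in> B}. (case i of (a1, a2) \<Rightarrow> ?Q a1 a2) = 0"
    proof
      fix i assume i: "i \<in> B \<times> B - {(a1, a2). a1 + a2 \<in> B}"
      obtain a1 a2 where i12: "i = (a1, a2)" by (cases i)
      have a: "a1 \<in> B" "a2 \<in> B" "a1 + a2 \<notin> B" using i i12 by auto
      have "Rep_sfr (PP x (a1 + a2)) m = 0"
        by (rule PP_cl_vanish[OF assms]) (use a in \<open>auto simp: B_def Bd_def\<close>)
      then show "(case i of (a1, a2) \<Rightarrow> ?Q a1 a2) = 0" by (simp add: PP_union i12)
    qed
  qed
  also have "\<dots> = (\<Sum>a1\<in>B. \<Sum>a2\<in>B. ?G a1 * ?H a2 * (\<Sum>b\<in>{b. b \<subseteq># m}. Rep_sfr (PP x a1) b * Rep_sfr (PP x a2) (m - b)))"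
    by (simp add: sum.cartesian_product Rep_mult)
  also have "\<dots> = (\<Sum>b\<in>{b. b \<subseteq># m}. \<Sum>a1\<in>B. \<Sum>a2\<in>B. (?G a1 * Rep_sfr (PP x a1) b) * (?H a2 * Rep_sfr (PP x a2) (m - b)))"
    by (simp add: sum_distrib_left sum.swap[where B="{b. b \<subseteq># m}"] mult_ac)
  also have "\<dots> = (\<Sum>b\<in>{b. b \<subseteq># m}. Rep_sfr (plr g x) b * Rep_sfr (plr h x) (m - b))"
  proof (rule sum.cong[OF refl])
    fix b assume b: "b \<in> {b. b \<subseteq># m}"
    have "Rep_sfr (plr g x) b = (\<Sum>a1\<in>B. ?G a1 * Rep_sfr (PP x a1) b)"
      unfolding B_def by (rule Rep_plr_ext[OF assms]) (use sub_sum_size[of b m] b in auto)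
    moreover have "Rep_sfr (plr h x) (m - b) = (\<Sum>a2\<in>B. ?H a2 * Rep_sfr (PP x a2) (m - b))"
      unfolding B_def by (rule Rep_plr_ext[OF assms]) (use sub_sum_size[of b m] b in auto)
    ultimately show "(\<Sum>a1\<in>B. \<Sum>a2\<in>B. (?G a1 * Rep_sfr (PP x a1) b) * (?H a2 * Rep_sfr (PP x a2) (m - b)))
        = Rep_sfr (plr g x) b * Rep_sfr (plr h x) (m - b)"
      by (simp add: sum_product)
  qed
  also have "\<dots> = Rep_sfr (plr g x * plr h x) m" by (simp add: Rep_mult)
  finally show "Rep_sfr (plr (g * h) x) m = Rep_sfr (plr g x * plr h x) m" .
qed


lemma Rep_Dr: "Rep_sfr (Dr y) m = of_nat (count m 1 + 1) * Rep_sfr y (add_mset 1 m)"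
  by (simp add: Dr.rep_eq sf_dp1_def)

lemma Dr_pkr_ge2: "k \<ge> 2 \<Longrightarrow> Dr (pkr k x) = 0"
proof (rule Rep_sfr_inject[THEN iffD1], rule ext)
  fix m assume k: "k \<ge> 2"
  show "Rep_sfr (Dr (pkr k x)) m = Rep_sfr 0 m"
    using k by (auto simp: Rep_Dr pkr.rep_eq sf_pk_def Rep_zero)
qed

lemma Dr_PP: "0 \<notin># a \<Longrightarrow> Dr (PP x a) = of_nat (count a 1) * PP x (a - {#1#}) * Dr x"
proof (induction a)
  case empty
  then show ?case by (simp add: Dr_one)
next
  case (add k a)
  have IH: "Dr (PP x a) = of_nat (count a 1) * PP x (a - {#1#}) * Dr x" using add by auto
  show ?case
  proof (cases "k = 1")
    case True
    have "x * (of_nat (count a 1) * PP x (a - {#1#})) = of_nat (count a 1) * PP x a"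
    proof (cases "1 \<in># a")
      case True
      then have "a = add_mset 1 (a - {#1#})" by simp
      then have "PP x a = x * PP x (a - {#1#})" by (metis PP_add_mset pkr_1)
      then show ?thesis by (simp add: mult_ac)
    next
      case False
      then show ?thesis by (simp add: not_in_iff)
    qed
    note h = this
    have "Dr (PP x (add_mset k a)) = Dr x * PP x a + x * Dr (PP x a)"
      using True by (simp add: PP_add_mset Dr_mult)
    also have "\<dots> = Dr x * PP x a + (x * (of_nat (count a 1) * PP x (a - {#1#}))) * Dr x"
      by (simp add: IH mult.assoc)
    also have "\<dots> = of_nat (count (add_mset k a) 1) * PP x (add_mset k a - {#1#}) * Dr x"
      unfolding h using True by (simp add: algebra_simps)
    finally show ?thesis .
  next
    case False
    then have k2: "k \<ge> 2" using add.prems by (cases k) auto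
    have "add_mset k a - {#1#} = add_mset k (a - {#1#})" using False by simp
    then show ?thesis using False
      by (simp add: PP_add_mset Dr_mult IH Dr_pkr_ge2[OF k2] mult_ac)
  qed
qed

lemma Dr_plr:
  assumes "cl x" shows "Dr (plr g x) = plr (Dr g) x * Dr x"
proof (rule Rep_sfr_inject[THEN iffD1], rule ext)
  fix m :: "nat multiset"
  define N where "N = sum_mset m + 1"
  define B where "B = Bd N (size m + 1)"
  define B' where "B' = Bd N (size m)"
  let ?G = "Rep_sfr g"
  let ?R = "\<lambda>a. Rep_sfr (PP x a * Dr x) m"
  have "Rep_sfr (Dr (plr g x)) m = of_nat (count m 1 + 1) * (\<Sum>a\<in>B. ?G a * Rep_sfr (PP x a) (add_mset 1 m))"
    unfolding Rep_Dr B_def N_def by (subst Rep_plr_ext[OF assms]) auto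
  also have "\<dots> = (\<Sum>a\<in>B. ?G a * Rep_sfr (Dr (PP x a)) m)"
    by (simp add: sum_distrib_left Rep_Dr mult_ac)
  also have "\<dots> = (\<Sum>a\<in>B. of_nat (count a 1) * (?G a * ?R (a - {#1#})))"
  proof (rule sum.cong[OF refl])
    fix a assume "a \<in> B"
    then have "0 \<notin># a" by (auto simp: B_def Bd_def)
    then show "?G a * Rep_sfr (Dr (PP x a)) m = of_nat (count a 1) * (?G a * ?R (a - {#1#}))"
      by (simp add: Dr_PP mult.assoc Rep_of_nat_mult)
  qed
  also have "\<dots> = (\<Sum>a\<in>{a\<in>B. 1 \<in># a}. of_nat (count a 1) * (?G a * ?R (a - {#1#})))"
    by (rule sum.mono_neutral_right) (auto simp: B_def finite_Bd not_in_iff)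
  also have "\<dots> = (\<Sum>a\<in>B'. of_nat (count a 1 + 1) * (?G (add_mset 1 a) * ?R a))"
  proof (rule sum.reindex_bij_witness[where j="\<lambda>a. a - {#1#}" and i="\<lambda>a. add_mset 1 a"])
    fix a assume a: "a \<in> {a\<in>B. 1 \<in># a}"
    then show "add_mset 1 (a - {#1#}) = a" by simp
    show "a - {#1#} \<in> B'" using a
      by (auto simp: B_def B'_def Bd_def size_Diff_singleton dest: in_diffD)
    show "of_nat (count (a - {#1#}) 1 + 1) * (?G (add_mset 1 (a - {#1#})) * ?R (a - {#1#}))
        = of_nat (count a 1) * (?G a * ?R (a - {#1#}))"
      using a by (auto simp: count_diff)
  next
    fix a assume "a \<in> B'"
    then show "add_mset 1 a - {#1#} = a" "add_mset 1 a \<in> {a\<in>B. 1 \<in># a}"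
      by (auto simp: B_def B'_def Bd_def N_def)
  qed
  also have "\<dots> = (\<Sum>b\<in>{b. b \<subseteq># m}. \<Sum>a\<in>B'. (of_nat (count a 1 + 1) * ?G (add_mset 1 a) * Rep_sfr (PP x a) b) * Rep_sfr (Dr x) (m - b))"
  proof -
    have "(\<Sum>a\<in>B'. of_nat (count a 1 + 1) * (?G (add_mset 1 a) * ?R a))
      = (\<Sum>a\<in>B'. \<Sum>b\<in>{b. b \<subseteq># m}. (of_nat (count a 1 + 1) * ?G (add_mset 1 a) * Rep_sfr (PP x a) b) * Rep_sfr (Dr x) (m - b))"
      unfolding Rep_mult by (rule sum.cong[OF refl]) (simp add: sum_distrib_left mult_ac)
    then show ?thesis by (simp add: sum.swap[where B="{b. b \<subseteq># m}"])
  qed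
  also have "\<dots> = (\<Sum>b\<in>{b. b \<subseteq># m}. Rep_sfr (plr (Dr g) x) b * Rep_sfr (Dr x) (m - b))"
  proof (rule sum.cong[OF refl])
    fix b assume b: "b \<in> {b. b \<subseteq># m}"
    have "Rep_sfr (plr (Dr g) x) b = (\<Sum>a\<in>B'. Rep_sfr (Dr g) a * Rep_sfr (PP x a) b)"
      unfolding B'_def by (rule Rep_plr_ext[OF assms]) (use sub_sum_size[of b m] b in \<open>auto simp: N_def\<close>)
    then show "(\<Sum>a\<in>B'. (of_nat (count a 1 + 1) * ?G (add_mset 1 a) * Rep_sfr (PP x a) b) * Rep_sfr (Dr x) (m - b))
        = Rep_sfr (plr (Dr g) x) b * Rep_sfr (Dr x) (m - b)"
      by (simp add: sum_distrib_right Rep_Dr)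
  qed
  also have "\<dots> = Rep_sfr (plr (Dr g) x * Dr x) m" by (simp add: Rep_mult)
  finally show "Rep_sfr (Dr (plr g x)) m = Rep_sfr (plr (Dr g) x * Dr x) m" .
qed


definition vu :: "nat \<Rightarrow> sf \<Rightarrow> bool" where
  "vu n f \<longleftrightarrow> (\<forall>m. size m \<le> n \<longrightarrow> 0 \<in># m \<longrightarrow> f m = 0)"

lemma vu_mult:
  assumes "vu n (Rep_sfr x)" "vu n (Rep_sfr y)" shows "vu n (Rep_sfr (x * y))"
  unfolding vu_def
proof safe
  fix m :: "nat multiset" assume m: "size m \<le> n" "0 \<in># m"
  show "Rep_sfr (x * y) m = 0"
    unfolding Rep_mult
  proof (rule sum.neutral, rule ballI)
    fix a assume a: "a \<in> {a. a \<subseteq># m}"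
    have sz: "size a \<le> n" "size (m - a) \<le> n" using sub_sum_size[of a m] a m by auto
    show "Rep_sfr x a * Rep_sfr y (m - a) = 0"
    proof (cases "0 \<in># a")
      case True then show ?thesis using assms sz by (simp add: vu_def)
    next
      case False
      then have "0 \<in># m - a" using m(2)
        by (simp add: in_diff_count not_in_iff)
      then show ?thesis using assms sz by (simp add: vu_def)
    qed
  qed
qed

lemma vu_add: "vu n (Rep_sfr x) \<Longrightarrow> vu n (Rep_sfr y) \<Longrightarrow> vu n (Rep_sfr (x + y))"
  by (simp add: vu_def Rep_add)
lemma vu_minus: "vu n (Rep_sfr x) \<Longrightarrow> vu n (Rep_sfr y) \<Longrightarrow> vu n (Rep_sfr (x - y))"
  by (simp add: vu_def Rep_minus)
lemma vu_one: "vu n (Rep_sfr 1)"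
  by (auto simp: vu_def Rep_one)
lemma vu_pp: "vu n (Rep_sfr pp)"
  by (auto simp: vu_def pp.rep_eq sf_p1_def)
lemma vu_tt: "vu n (Rep_sfr tt)"
  by (auto simp: vu_def tt.rep_eq)

lemma vu_pkr: "vu n (Rep_sfr x) \<Longrightarrow> k \<ge> 1 \<Longrightarrow> vu n (Rep_sfr (pkr k x))"
  unfolding vu_def
proof safe
  fix m :: "nat multiset"
  assume h: "\<forall>m. size m \<le> n \<longrightarrow> 0 \<in># m \<longrightarrow> Rep_sfr x m = 0" "k \<ge> 1" "size m \<le> n" "0 \<in># m"
  have "0 \<in># image_mset (\<lambda>j. j div k) m" using h(4) by force
  then show "Rep_sfr (pkr k x) m = 0" using h by (auto simp: pkr.rep_eq sf_pk_def)
qed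

lemma vu_PP: "vu n (Rep_sfr x) \<Longrightarrow> 0 \<notin># a \<Longrightarrow> vu n (Rep_sfr (PP x a))"
proof (induction a)
  case empty then show ?case by (simp add: vu_one)
next
  case (add k a)
  then have "k \<ge> 1" by (cases k) auto
  then show ?case using add by (simp add: PP_add_mset vu_mult vu_pkr)
qed

lemma vu_plr: "vu n (Rep_sfr x) \<Longrightarrow> vu n (Rep_sfr (plr g x))"
  unfolding vu_def Rep_plr
proof safe
  fix m :: "nat multiset"
  assume h: "\<forall>m. size m \<le> n \<longrightarrow> 0 \<in># m \<longrightarrow> Rep_sfr x m = 0" "size m \<le> n" "0 \<in># m"
  show "(\<Sum>a\<in>Bd (sum_mset m) (size m). Rep_sfr g a * Rep_sfr (PP x a) m) = 0"
  proof (rule sum.neutral, rule ballI)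
    fix a assume "a \<in> Bd (sum_mset m) (size m)"
    then have "0 \<notin># a" by (auto simp: Bd_def)
    then have "vu n (Rep_sfr (PP x a))" using vu_PP h(1) by (simp add: vu_def)
    then show "Rep_sfr g a * Rep_sfr (PP x a) m = 0" using h by (simp add: vu_def)
  qed
qed

lemma vu_pp_mult: "vu n (Rep_sfr y) \<Longrightarrow> vu (Suc n) (Rep_sfr (pp * y))"
  unfolding vu_def Rep_pp_mult
proof safe
  fix m :: "nat multiset"
  assume h: "\<forall>m. size m \<le> n \<longrightarrow> 0 \<in># m \<longrightarrow> Rep_sfr y m = 0" "size m \<le> Suc n" "0 \<in># m"
  show "(if 1 \<in># m then Rep_sfr y (m - {#1#}) else 0) = 0"
  proof (cases "1 \<in># m")
    case True
    then have "size (m - {#1#}) \<le> n" "0 \<in># m - {#1#}" using h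
      by (auto simp: size_Diff_singleton in_diff_count)
    then show ?thesis using h by simp
  qed simp
qed

lemma clean_vu: "(\<And>n. vu n f) \<Longrightarrow> clean f"
  by (auto simp: clean_def vu_def)
lemma vu_clean: "clean f \<Longrightarrow> vu n f"
  by (auto simp: clean_def vu_def)

lemma plr_empty: "Rep_sfr (plr g x) {#} = Rep_sfr g {#}"
  by (simp add: Rep_plr Bd_def Rep_one)

lemma cl_plr: "cl x \<Longrightarrow> Rep_sfr g {#} = 0 \<Longrightarrow> cl (plr g x)"
  unfolding cl_def by (metis plr_empty clean_vu vu_plr vu_clean)


lift_definition sA :: sfr is "sf_susp sf_Assoc" .
lift_definition sL :: sfr is "sf_susp sf_Lie" .
lift_definition comm :: sfr is sf_Comm .

lemma ones_sum: "set_mset m \<subseteq> {1} \<Longrightarrow> sum_mset m = size (m::nat multiset)"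
  by (induction m) auto

lemma ones_count: "set_mset m \<subseteq> {1} \<Longrightarrow> count m 1 = size (m::nat multiset)"
  by (induction m) auto

lemma ones_rep: "set_mset m \<subseteq> {1} \<Longrightarrow> m = replicate_mset (size m) (1::nat)"
  by (induction m) auto

lemma tmult_monom: "[:0, 1:] * monom (a::rat) k = monom a (Suc k)"
  by (simp add: monom_Suc)

definition phiA :: "nat \<Rightarrow> rat poly" where
  "phiA n = (if n = 0 then 0 else monom (- ((-1) ^ n)) (n - 1))"

lemma phiA_id: "phiA n + (if n \<ge> 1 then [:0, 1:] * phiA (n - 1) else 0)
   = (if n = 1 then 1 else (0::rat poly))"
proof (cases n)
  case (Suc k)
  show ?thesis
  proof (cases k)
    case 0 then show ?thesis using Suc by (simp add: monom_0 one_pCons phiA_def)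
  next
    case (Suc j)
    have "monom (- ((-1) ^ Suc (Suc j))) (Suc j) + [:0, 1:] * monom (- ((-1) ^ Suc j)) j = (0 :: rat poly)"
      unfolding tmult_monom add_monom by simp
    then show ?thesis using Suc \<open>n = Suc k\<close> by (simp add: phiA_def)
  qed
qed (simp add: phiA_def)

lemma ones_mult:
  assumes "\<And>m. Rep_sfr y m = (if set_mset m \<subseteq> {1} then \<phi> (size m) else 0)"
  shows "Rep_sfr (y * (1 + tt * pp)) m = (if set_mset m \<subseteq> {1}
            then \<phi> (size m) + (if size m \<ge> 1 then [:0, 1:] * \<phi> (size m - 1) else 0) else 0)"
proof -
  have e: "y * (1 + tt * pp) = y + tt * (pp * y)" by (simp add: algebra_simps)
  have R: "Rep_sfr (y * (1 + tt * pp)) m = Rep_sfr y m + [:0, 1:] * (if 1 \<in># m then Rep_sfr y (m - {#1#}) else 0)"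
    unfolding e Rep_add Rep_tt_mult Rep_pp_mult ..
  show ?thesis
  proof (cases "set_mset m \<subseteq> {1}")
    case True
    have "1 \<in># m \<longleftrightarrow> size m \<ge> 1" using True
      by (metis One_nat_def Suc_le_eq empty_iff insert_subset multiset_nonemptyE size_eq_0_iff_empty
          subset_singletonD neq0_conv set_mset_eq_empty_iff)
    moreover have "set_mset (m - {#1#}) \<subseteq> {1}" using True
      by (meson in_diffD subset_iff)
    moreover have "1 \<in># m \<Longrightarrow> size (m - {#1#}) = size m - 1" by (simp add: size_Diff_singleton)
    ultimately show ?thesis using True R assms by auto
  next
    case False
    then obtain x where x: "x \<in># m" "x \<noteq> 1" by auto
    then have "1 \<in># m \<Longrightarrow> \<not> set_mset (m - {#1#}) \<subseteq> {1}"
      by (metis in_diff_count count_greater_zero_iff count_single insertCI less_not_refl3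
          subset_singletonD singletonD empty_iff)
    then show ?thesis using False R assms by auto
  qed
qed

lemma Rep_sA: "Rep_sfr sA m = (if set_mset m \<subseteq> {1} then phiA (size m) else 0)"
  by (auto simp: sA.rep_eq sf_susp_def sf_Assoc_def ones_sum smult_monom phiA_def)

lemma S1: "sA * (1 + tt * pp) = pp"
proof (rule Rep_sfr_inject[THEN iffD1], rule ext)
  fix m :: "nat multiset"
  have "Rep_sfr (sA * (1 + tt * pp)) m = (if set_mset m \<subseteq> {1}
            then (if size m = 1 then 1 else 0) else 0)"
    unfolding ones_mult[OF Rep_sA]
  proof (cases "set_mset m \<subseteq> {1}")
    case True
    then show "(if set_mset m \<subseteq> {1} then phiA (size m) + (if size m \<ge> 1 then [:0, 1:] * phiA (size m - 1) else 0)
       else 0) = (if set_mset m \<subseteq> {1} then (if size m = 1 then 1 else 0) else 0)"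
      using True phiA_id[of "size m"] by (simp only: if_True)
  qed simp
  also have "\<dots> = Rep_sfr pp m"
  proof (cases "set_mset m \<subseteq> {1}")
    case True
    have "size m = 1 \<longleftrightarrow> m = {#1#}" using True
      by (metis ones_rep One_nat_def replicate_mset_0 replicate_mset_Suc size_single)
    then show ?thesis using True by (simp add: pp.rep_eq sf_p1_def)
  next
    case False
    then have "m \<noteq> {#1#}" by auto
    then show ?thesis using False by (simp add: pp.rep_eq sf_p1_def)
  qed
  finally show "Rep_sfr (sA * (1 + tt * pp)) m = Rep_sfr pp m" .
qed


definition phiL :: "nat \<Rightarrow> rat poly" where
  "phiL n = monom ((-1) ^ n) n"

lemma phiL_id: "phiL n + (if n \<ge> 1 then [:0, 1:] * phiL (n - 1) else 0)
   = (if n = 0 then 1 else (0::rat poly))"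
proof (cases n)
  case 0 then show ?thesis by (simp add: phiL_def monom_0 one_pCons)
next
  case (Suc k)
  have "monom ((-1) ^ Suc k) (Suc k) + [:0, 1:] * monom ((-1) ^ k) k = (0 :: rat poly)"
    unfolding tmult_monom add_monom by simp
  then show ?thesis using Suc by (simp add: phiL_def)
qed

lemma rep1_eq: "n \<ge> 1 \<Longrightarrow> replicate_mset n (1::nat) = replicate_mset n' k \<longleftrightarrow> (n' = n \<and> k = 1)"
proof
  assume n: "n \<ge> 1" and e: "replicate_mset n (1::nat) = replicate_mset n' k"
  have "n' = n" using arg_cong[OF e, of size] by simp
  moreover have "count (replicate_mset n (1::nat)) 1 = count (replicate_mset n' k) 1" using e by simp
  ultimately show "n' = n \<and> k = 1" using n by (auto split: if_splits)
qed auto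

lemma mobius_1: "mobius 1 = 1"
  by (simp add: mobius_def)

lemma mobius_Suc0: "mobius (Suc 0) = 1"
  using mobius_1 by simp

lemma Lie_rep1: "n \<ge> 1 \<Longrightarrow> sf_Lie (replicate_mset n 1) = [:1 / of_nat n:]"
proof -
  assume n: "n \<ge> 1"
  have sr: "sum_mset (replicate_mset n (1::nat)) = n" by (induction n) auto
  have "sf_Lie (replicate_mset n 1) = (\<Sum>k\<in>{1..n}. \<Sum>n'\<in>{1..n}.
      if k = 1 then (if n' = n then [: of_int (mobius k) / of_nat (k * n') :] else 0) else 0)"
    unfolding sf_Lie_def sr size_replicate_mset
  proof (intro sum.cong refl)
    fix k n' 
    show "(if replicate_mset n 1 = replicate_mset n' k then [: of_int (mobius k) / of_nat (k * n') :] else 0)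
       = (if k = 1 then (if n' = n then [: of_int (mobius k) / of_nat (k * n') :] else 0) else 0)"
      using rep1_eq[OF n, of n' k] by (simp only: if_splits) (metis (full_types))
  qed
  also have "\<dots> = (\<Sum>k\<in>{1..n}. if k = 1 then [: of_int (mobius k) / of_nat (k * n) :] else 0)"
    using n by (intro sum.cong refl) (simp add: sum.delta')
  also have "\<dots> = [:1 / of_nat n:]" using n by (simp add: sum.delta' mobius_1 mobius_Suc0)
  finally show ?thesis .
qed

lemma Lie_zero: assumes "1 \<in># M" "x \<in># M" "x \<noteq> 1" shows "sf_Lie M = 0"
  unfolding sf_Lie_def
proof (intro sum.neutral ballI)
  fix k n'
  have "M \<noteq> replicate_mset n' k"
  proof
    assume e: "M = replicate_mset n' k"
    have "1 = k" using assms(1) unfolding e by (auto simp: in_replicate_mset split: if_splits)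
    moreover have "x = k" using assms(2) unfolding e by (auto simp: in_replicate_mset split: if_splits)
    ultimately show False using assms(3) by simp
  qed
  then show "(if M = replicate_mset n' k then [: of_int (mobius k) / of_nat (k * n') :] else 0) = 0" by simp
qed

lemma coefL: "of_nat (n+1) * smult (- ((-1) ^ (n + 1))) (monom 1 n * [:1 / of_nat (n + 1):]) = (monom ((-1)^n) n :: rat poly)"
proof -
  have e1: "monom (1::rat) n * [:1 / of_nat (n + 1):] = monom (1 / of_nat (n+1)) n"
    by (simp add: mult.commute[of "monom 1 n"] smult_monom)
  have e2: "(of_nat (n+1) :: rat poly) * q = smult (of_nat (n+1)) q" for q
    by (rule of_nat_mult_conv_smult)
  have e4: "of_nat (n+1) * (- ((-1) ^ (n + 1)) * (1 / of_nat (n+1))) = ((-1)^n :: rat)"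
    by (simp del: of_nat_Suc)
  show ?thesis
    apply (subst e1)
    apply (subst e2)
    apply (simp only: smult_monom)
    apply (subst e4)
    apply (rule refl)
    done
qed

lemma Rep_DsL: "Rep_sfr (Dr sL) m = (if set_mset m \<subseteq> {1} then phiL (size m) else 0)"
proof (cases "set_mset m \<subseteq> {1}")
  case True
  define n where "n = size m"
  have M: "add_mset 1 m = replicate_mset (n + 1) 1" using ones_rep[OF True] n_def by simp
  have "Rep_sfr (Dr sL) m = of_nat (n + 1) * smult (- ((-1) ^ (n + 1))) (monom 1 n * [:1 / of_nat (n + 1):])"
  proof -
    have L: "sf_Lie (add_mset 1 m) = [:1 / of_nat (n+1):]" unfolding M by (rule Lie_rep1) simp
    have c: "count m 1 = n" "sum_mset m = n" using True n_def ones_count ones_sum by auto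
    show ?thesis unfolding Rep_Dr sL.rep_eq sf_susp_def L using c n_def by simp
  qed
  also have "\<dots> = phiL n" unfolding phiL_def by (rule coefL)
  finally show ?thesis using True n_def by simp
next
  case False
  then obtain x where "x \<in># m" "x \<noteq> 1" by auto
  then have "sf_Lie (add_mset 1 m) = 0" by (intro Lie_zero[of _ x]) auto
  then show ?thesis using False by (simp add: Rep_Dr sL.rep_eq sf_susp_def)
qed

lemma S2: "Dr sL * (1 + tt * pp) = 1"
proof (rule Rep_sfr_inject[THEN iffD1], rule ext)
  fix m :: "nat multiset"
  show "Rep_sfr (Dr sL * (1 + tt * pp)) m = Rep_sfr 1 m"
    unfolding ones_mult[OF Rep_DsL]
  proof (cases "set_mset m \<subseteq> {1}")
    case True
    then show "(if set_mset m \<subseteq> {1} then phiL (size m) + (if size m \<ge> 1 then [:0, 1:] * phiL (size m - 1) else 0)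
       else 0) = Rep_sfr 1 m"
      using phiL_id[of "size m"] by (simp add: Rep_one)
  qed (auto simp: Rep_one)
qed

lemma zee_add1: "zee (add_mset 1 m) = (count m 1 + 1) * zee m"
proof -
  let ?F = "\<lambda>m i. i ^ count m i * fact (count m i) :: nat"
  have gen: "zee m' = fact (count m' 1) * (\<Prod>i\<in>set_mset m' - {1}. ?F m' i)" for m'
  proof (cases "1 \<in># m'")
    case True
    then show ?thesis unfolding zee_def by (subst prod.remove[of _ 1]) auto
  next
    case False
    then show ?thesis unfolding zee_def by (simp add: not_in_iff)
  qed
  have "(\<Prod>i\<in>set_mset (add_mset 1 m) - {1}. ?F (add_mset 1 m) i) = (\<Prod>i\<in>set_mset m - {1}. ?F m i)"
    by (intro prod.cong) auto
  then show ?thesis unfolding gen[of "add_mset 1 m"] gen[of m] by (simp add: algebra_simps)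
qed

lemma ratc: "(of_nat (c+1)::rat) * (1 / of_nat ((c+1)*z)) = 1 / of_nat z"
proof -
  have ne: "(of_nat (c+1)::rat) \<noteq> 0" by (simp only: of_nat_eq_0_iff)
  have "(of_nat (c+1)::rat) * (1 / of_nat ((c+1)*z)) = (of_nat (c+1) * 1) / (of_nat (c+1) * of_nat z)"
    by (simp only: of_nat_mult times_divide_eq_right)
  also have "\<dots> = 1 / of_nat z" by (subst mult_divide_mult_cancel_left[OF ne]) (rule refl)
  finally show ?thesis .
qed
lemma polyc: "(of_nat k :: rat poly) * [:r:] = [:of_nat k * r:]"
  by (simp add: of_nat_poly)

lemma S3: "Dr comm = 1 + comm"
proof (rule Rep_sfr_inject[THEN iffD1], rule ext)
  fix m :: "nat multiset"
  show "Rep_sfr (Dr comm) m = Rep_sfr (1 + comm) m"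
  proof (cases "0 \<in># m")
    case True
    then show ?thesis by (auto simp: Rep_Dr comm.rep_eq sf_Comm_def Rep_add Rep_one)
  next
    case False
    have z: "(of_nat (count m 1 + 1) :: rat poly) * [:1 / of_nat (zee (add_mset 1 m)):] = [:1 / of_nat (zee m):]"
      unfolding zee_add1 polyc ratc by (rule refl)
    show ?thesis using False z
      by (auto simp: Rep_Dr comm.rep_eq sf_Comm_def Rep_add Rep_one zee_def one_pCons)
  qed
qed


lemma key_algebra:
  fixes p t c S E Lp Dc Du Dh :: sfr
  assumes h1: "S * (1 + t * c) = c"
    and h2: "E * (1 + t * c) = 1 - t * S"
    and h3: "Lp * (1 + t * c) = 1"
    and h4: "Dc = (1 + c) * Du"
    and h5: "Du = 1 - t * Dh"
    and h6: "Dh = S + p * (E * Dc)"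
  shows "p * (Lp * Dc) + Dc - Du - Dh = 0"
proof -
  let ?q = "1 + t * c"
  let ?Y = "p * (Lp * Dc) + Dc - Du - Dh"
  define r1 where "r1 = S * ?q - c"
  define r2 where "r2 = E * ?q - (1 - t * S)"
  define r3 where "r3 = Lp * ?q - 1"
  define r4 where "r4 = Dc - (1 + c) * Du"
  define r5 where "r5 = Du - (1 - t * Dh)"
  define r6 where "r6 = Dh - (S + p * (E * Dc))"
  have id: "?q * ?Y = p*Dc*r3 - ?q*r6 - r1 - p*Dc*r2 + ?q*r4 + ?q*c*r5 - t*c*?q*r6 - t*c*r1 - t*c*p*Dc*r2 + t*p*Dc*r1"
    unfolding r1_def r2_def r3_def r4_def r5_def r6_def by (simp add: algebra_simps)
  have "r1 = 0" "r2 = 0" "r3 = 0" "r4 = 0" "r5 = 0" "r6 = 0"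
    unfolding r1_def r2_def r3_def r4_def r5_def r6_def using assms by simp_all
  then have "?q * ?Y = 0" unfolding id by simp
  then have "Lp * (?q * ?Y) = 0" by simp
  then show ?thesis using h3 by (simp add: mult.assoc[symmetric])
qed


lemma vu_0: "vu 0 f"
  by (auto simp: vu_def)

theorem mainTheorem4:
  fixes Hpa Hp Ha H :: sf
  assumes "Hpa = sf_mult sf_p1
             (sf_pleth (sf_susp sf_Assoc) (sf_pleth sf_Comm (sf_minus sf_p1 (sf_tmult Hpa))))"
    and "Hp = sf_mult sf_p1
             (sf_pleth (sf_susp sf_Lie) (sf_pleth sf_Comm (sf_minus sf_p1 (sf_tmult Hpa))))"
    and "Ha = sf_pleth (sf_minus sf_Comm sf_p1) (sf_minus sf_p1 (sf_tmult Hpa))"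
    and "H = sf_minus (sf_add Hp Ha) Hpa"
  shows "Hp = sf_mult sf_p1 (sf_dp1 H)"
proof -
  define hpa where "hpa = Abs_sfr Hpa"
  define u where "u = pp - tt * hpa"
  define c where "c = plr comm u"
  define hp where "hp = Abs_sfr Hp"
  define ha where "ha = Abs_sfr Ha"
  define h where "h = Abs_sfr H"
  have RH: "Rep_sfr hpa = Hpa" by (simp add: hpa_def Abs_sfr_inverse)
  have Ru: "Rep_sfr u = sf_minus sf_p1 (sf_tmult Hpa)"
    by (rule ext) (simp add: u_def Rep_minus pp.rep_eq Rep_tt_mult sf_tmult_def sf_minus_def RH)
  have Rc: "Rep_sfr c = sf_pleth sf_Comm (sf_minus sf_p1 (sf_tmult Hpa))"
    by (simp add: c_def plr.rep_eq comm.rep_eq Ru)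
  have eq1: "hpa = pp * plr sA c"
    by (rule Rep_sfr_inject[THEN iffD1])
       (simp add: times_sfr.rep_eq pp.rep_eq plr.rep_eq sA.rep_eq Rc RH assms(1)[symmetric])
  have eq2: "hp = pp * plr sL c"
    by (rule Rep_sfr_inject[THEN iffD1])
       (simp add: hp_def Abs_sfr_inverse times_sfr.rep_eq pp.rep_eq plr.rep_eq sL.rep_eq Rc assms(2))
  have eq3: "ha = plr (comm - pp) u"
    by (rule Rep_sfr_inject[THEN iffD1])
       (simp add: ha_def Abs_sfr_inverse plr.rep_eq minus_sfr.rep_eq comm.rep_eq pp.rep_eq Ru assms(3))
  have eq4: "h = hp + ha - hpa"
    by (rule Rep_sfr_inject[THEN iffD1])
       (simp add: h_def hp_def ha_def hpa_def Abs_sfr_inverse minus_sfr.rep_eq plus_sfr.rep_eq assms(4))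
  have vh: "vu n (Rep_sfr hpa)" for n
  proof (induction n)
    case 0 then show ?case by (rule vu_0)
  next
    case (Suc n)
    have "vu n (Rep_sfr u)" unfolding u_def using Suc by (intro vu_minus vu_pp vu_mult vu_tt)
    then have "vu n (Rep_sfr c)" unfolding c_def by (rule vu_plr)
    then have "vu n (Rep_sfr (plr sA c))" by (rule vu_plr)
    then show ?case by (subst eq1) (rule vu_pp_mult)
  qed
  have h0: "Rep_sfr hpa {#} = 0"
    by (subst eq1) (simp add: Rep_pp_mult)
  have clu: "cl u"
    unfolding cl_def
  proof
    show "clean (Rep_sfr u)"
      by (rule clean_vu) (unfold u_def, intro vu_minus vu_pp vu_mult vu_tt vh)
    show "Rep_sfr u {#} = 0"
      by (simp add: u_def Rep_minus Rep_tt_mult h0 pp.rep_eq sf_p1_def)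
  qed
  have clc: "cl c" unfolding c_def
    by (rule cl_plr[OF clu]) (simp add: comm.rep_eq sf_Comm_def)
  define S where "S = plr sA c"
  define E where "E = plr (Dr sA) c"
  define Lp where "Lp = plr (Dr sL) c"
  have pq: "plr (1 + tt * pp) c = 1 + tt * c"
    by (simp add: plr_add plr_one plr_tt plr_pp[OF clc])
  have h1: "S * (1 + tt * c) = c"
    using plr_mult[OF clc, of sA "1 + tt * pp"] unfolding S1 plr_pp[OF clc] pq S_def by simp
  have DsA: "Dr sA * (1 + tt * pp) = 1 - tt * sA"
  proof -
    have "Dr (sA * (1 + tt * pp)) = Dr pp" by (simp add: S1)
    then have "Dr sA * (1 + tt * pp) + sA * tt = 1"
      by (simp add: Dr_mult Dr_add Dr_one Dr_tt Dr_pp)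
    then show ?thesis by (simp add: algebra_simps eq_diff_eq)
  qed
  have h2: "E * (1 + tt * c) = 1 - tt * S"
    using plr_mult[OF clc, of "Dr sA" "1 + tt * pp"] unfolding DsA pq E_def S_def
    by (simp add: plr_minus plr_one plr_tt)
  have h3: "Lp * (1 + tt * c) = 1"
    using plr_mult[OF clc, of "Dr sL" "1 + tt * pp"] unfolding S2 pq Lp_def
    by (simp add: plr_one)
  have h4: "Dr c = (1 + c) * Dr u"
    unfolding c_def Dr_plr[OF clu] S3 by (simp add: plr_add plr_one)
  have h5: "Dr u = 1 - tt * Dr hpa"
    by (simp add: u_def Dr_minus Dr_mult Dr_pp Dr_tt)
  have h6: "Dr hpa = S + pp * (E * Dr c)"
    by (subst eq1) (simp add: Dr_mult Dr_pp S_def E_def Dr_plr[OF clc])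
  have Y: "pp * (Lp * Dr c) + Dr c - Dr u - Dr hpa = 0"
    by (rule key_algebra[OF h1 h2 h3 h4 h5 h6])
  have hpD: "Dr hp = plr sL c + pp * (Lp * Dr c)"
    by (simp add: eq2 Dr_mult Dr_pp Lp_def Dr_plr[OF clc])
  have haE: "ha = c - u"
    by (simp add: eq3 plr_minus plr_pp[OF clu] c_def)
  have "hp = pp * Dr h"
  proof -
    have "Dr h = plr sL c + (pp * (Lp * Dr c) + Dr c - Dr u - Dr hpa)"
      by (simp add: eq4 haE Dr_add Dr_minus hpD algebra_simps)
    then have "Dr h = plr sL c" using Y by simp
    then show ?thesis by (simp add: eq2)
  qed
  then have "Rep_sfr hp = Rep_sfr (pp * Dr h)" by simp
  then show ?thesis
    by (simp add: hp_def h_def Abs_sfr_inverse times_sfr.rep_eq pp.rep_eq Dr.rep_eq)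
qed

end
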